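(* Let $q\neq-1$ be real and $n\ge0$. Then $$U_{2n+1}(x,s,q)=\sum_{k=0}^{n}\begin{bmatrix} 2n+2\\ 2k\end{bmatrix}\frac{1}{[2k+1]}(-q;q)_{2n-2k+1}(-1)^{n-k}G_{2n-2k+2}(q)\,x^{2n+1-2k}\,U_{2k}(x,s,q).$$
   Context: $U_{-1}=0$, $U_0=1$, $U_n(x,s,q)=(1+q^{n})x\,U_{n-1}(x,s,q)+q^{n-1}s\,U_{n-2}(x,s,q)$ for $n\ge1$. Notation: $[m]=1+q+\cdots+q^{m-1}$, $[m]!=[1]\cdots[m]$, $\begin{bmatrix} m\\ j\end{bmatrix}=\frac{[m]!}{[j]![m-j]!}$; $(a;q)_m=(1-a)(1-aq)\cdots(1-aq^{m-1})$, so $(-q;q)_m=(1+q)\cdots(1+q^m)$. With $e(z)=\sum_{m\ge0}z^m/[m]!$, the $q$-Genocchi numbers $G_{2m}(q)$, $m\ge1$, are defined by the formal power series identity $z\frac{e(z)-e(-z)}{e(z)+e(-z)}=\sum_{m\ge1}\frac{(-1)^{m-1}G_{2m}(q)(-q;q)_{2m-1}}{[2m]!}z^{2m}$. *)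

theory Defs
  imports Complex_Main "HOL-Computational_Algebra.Formal_Power_Series"
begin

text \<open>The sequence U_n(x,s,q), shifted so that U_{-1} = 0 is built in:
  U_0 = 1, U_1 = (1+q) x U_0 + s U_{-1} = (1+q) x,
  U_{n+2} = (1+q^{n+2}) x U_{n+1} + q^{n+1} s U_n.\<close>
fun U :: "nat \<Rightarrow> real \<Rightarrow> real \<Rightarrow> real \<Rightarrow> real" where
  "U 0 x s q = 1"
| "U (Suc 0) x s q = (1 + q) * x * 1 + s * 0"
| "U (Suc (Suc n)) x s q =
     (1 + q ^ (n + 2)) * x * U (Suc n) x s q + q ^ (n + 1) * s * U n x s q"

definition qint :: "real \<Rightarrow> nat \<Rightarrow> real" where
  "qint q m = (\<Sum>i<m. q ^ i)"

definition qfact :: "real \<Rightarrow> nat \<Rightarrow> real" where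
  "qfact q m = (\<Prod>i=1..m. qint q i)"

definition qbinom :: "real \<Rightarrow> nat \<Rightarrow> nat \<Rightarrow> real" where
  "qbinom q m j = qfact q m / (qfact q j * qfact q (m - j))"

definition qpoch :: "real \<Rightarrow> real \<Rightarrow> nat \<Rightarrow> real" where
  "qpoch a q m = (\<Prod>i<m. (1 - a * q ^ i))"

definition qexp_fps :: "real \<Rightarrow> real fps" where
  "qexp_fps q = Abs_fps (\<lambda>m. 1 / qfact q m)"

definition qexp_neg_fps :: "real \<Rightarrow> real fps" where
  "qexp_neg_fps q = Abs_fps (\<lambda>m. (-1) ^ m / qfact q m)"

definition qgen_fps :: "real \<Rightarrow> real fps" where
  "qgen_fps q = fps_X * (qexp_fps q - qexp_neg_fps q) * inverse (qexp_fps q + qexp_neg_fps q)"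

text \<open>q-Genocchi number G_j(q) for even j = 2m, m >= 1: the unique g with
  [z^(2m)] qgen_fps = (-1)^(m-1) g (-q;q)_(2m-1) / [2m]!.\<close>
definition qgenocchi :: "real \<Rightarrow> nat \<Rightarrow> real" where
  "qgenocchi q j = (THE g. fps_nth (qgen_fps q) j =
       (-1) ^ (j div 2 - 1) * g * qpoch (-q) q (j - 1) / qfact q j)"

end

theory Submission
  imports Defs
begin
unbundle fps_syntax

lemma qint_Suc: "qint q (Suc m) = qint q m + q ^ m"
  by (simp add: qint_def)

lemma qint_0 [simp]: "qint q 0 = 0" by (simp add: qint_def)

lemma qint_add: "qint q (a + b) = qint q a * q ^ b + qint q b"
  by (induction a) (auto simp: qint_Suc algebra_simps power_add)

lemma qint_mul_diff: "(1 - q) * qint q m = 1 - q ^ m"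
proof (induction m)
  case (Suc m)
  have "(1 - q) * qint q (Suc m) = (1 - q) * qint q m + (1 - q) * q ^ m"
    by (simp add: qint_Suc distrib_left)
  also have "\<dots> = 1 - q ^ Suc m" using Suc by (simp add: algebra_simps)
  finally show ?case .
qed simp

lemma pow_eq_neg1: fixes q :: real assumes "q ^ m = -1" shows "q = -1"
proof -
  have "\<bar>q\<bar> ^ m = 1" using assms by (metis abs_neg_one power_abs)
  moreover have "m \<noteq> 0" using assms by (cases m) auto
  ultimately have "\<bar>q\<bar> = 1" by (metis power_eq_imp_eq_base abs_ge_zero zero_le_one power_one gr0I)
  then have "q = 1 \<or> q = -1" by auto
  then show ?thesis using assms by auto
qed

lemma qint_nz: fixes q :: real assumes "q \<noteq> -1" "m \<noteq> 0" shows "qint q m \<noteq> 0"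
proof (cases "q = 1")
  case True then show ?thesis using assms by (simp add: qint_def)
next
  case False
  show ?thesis
  proof
    assume "qint q m = 0"
    then have "q ^ m = 1" using qint_mul_diff[of q m] by simp
    then have "\<bar>q\<bar> ^ m = 1" by (metis abs_one power_abs)
    then have "\<bar>q\<bar> = 1" using assms by (metis power_eq_imp_eq_base abs_ge_zero zero_le_one power_one gr0I)
    then show False using False assms by auto
  qed
qed

lemma qfact_Suc: "qfact q (Suc m) = qfact q m * qint q (Suc m)"
  by (simp add: qfact_def)

lemma qfact_0 [simp]: "qfact q 0 = 1" by (simp add: qfact_def)

lemma qfact_nz: fixes q :: real assumes "q \<noteq> -1" shows "qfact q m \<noteq> 0"
  using assms by (induction m) (auto simp: qfact_Suc qint_nz)

lemma qpoch_nz: fixes q :: real assumes "q \<noteq> -1" shows "qpoch (-q) q m \<noteq> 0"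
proof -
  have "\<forall>i\<in>{..<m}. 1 - - q * q ^ i \<noteq> 0"
  proof
    fix i assume "i \<in> {..<m}"
    show "1 - - q * q ^ i \<noteq> 0"
    proof
      assume "1 - - q * q ^ i = 0"
      then have "q ^ Suc i = -1" by simp
      then show False using pow_eq_neg1 assms by blast
    qed
  qed
  then show ?thesis unfolding qpoch_def by simp
qed

definition sc :: "real \<Rightarrow> real fps \<Rightarrow> real fps" where
  "sc c f = Abs_fps (\<lambda>n. c ^ n * f $ n)"

definition qd :: "real \<Rightarrow> real fps \<Rightarrow> real fps" where
  "qd q f = Abs_fps (\<lambda>n. qint q (Suc n) * f $ Suc n)"

lemma sc_nth [simp]: "sc c f $ n = c ^ n * f $ n" by (simp add: sc_def)
lemma qd_nth [simp]: "qd q f $ n = qint q (Suc n) * f $ Suc n" by (simp add: qd_def)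

lemma sc_mult: "sc c (f * g) = sc c f * sc c g"
proof (rule fps_ext)
  fix n
  have "sc c (f * g) $ n = (\<Sum>i=0..n. c ^ n * (f $ i * g $ (n - i)))"
    by (simp add: fps_mult_nth sum_distrib_left)
  also have "\<dots> = (\<Sum>i=0..n. (c ^ i * f $ i) * (c ^ (n - i) * g $ (n - i)))"
    by (rule sum.cong) (auto simp: power_add[symmetric])
  finally show "sc c (f * g) $ n = (sc c f * sc c g) $ n" by (simp add: fps_mult_nth)
qed

lemma sc_add: "sc c (f + g) = sc c f + sc c g"
  by (rule fps_ext) (simp add: algebra_simps)
lemma sc_diff: "sc c (f - g) = sc c f - sc c g"
  by (rule fps_ext) (simp add: algebra_simps)
lemma sc_const: "sc c (fps_const a) = fps_const a"
  by (rule fps_ext) (case_tac n; simp)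
lemma sc_cmult: "sc c (fps_const a * f) = fps_const a * sc c f"
  by (rule fps_ext) simp
lemma sc_X: "sc c fps_X = fps_const c * fps_X"
  by (rule fps_ext) (case_tac "n = 1"; simp)
lemma sc_sc: "sc a (sc b f) = sc (a * b) f"
  by (rule fps_ext) (simp add: power_mult_distrib)
lemma sc_one: "sc 1 f = f" by (rule fps_ext) simp

lemma qd_add: "qd q (f + g) = qd q f + qd q g"
  by (rule fps_ext) (simp add: algebra_simps)
lemma qd_cmult: "qd q (fps_const a * f) = fps_const a * qd q f"
  by (rule fps_ext) simp
lemma qd_sc: "qd q (sc q f) = fps_const q * sc q (qd q f)"
  by (rule fps_ext) simp

lemma qd_mult: "qd q (f * g) = qd q f * sc q g + f * qd q g"
proof (rule fps_ext)
  fix n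
  have "qd q (f * g) $ n = (\<Sum>i=0..Suc n. qint q (Suc n) * (f $ i * g $ (Suc n - i)))"
    by (simp only: qd_nth fps_mult_nth sum_distrib_left)
  also have "\<dots> = (\<Sum>i=0..Suc n. qint q i * q ^ (Suc n - i) * (f $ i * g $ (Suc n - i)))
       + (\<Sum>i=0..Suc n. qint q (Suc n - i) * (f $ i * g $ (Suc n - i)))"
    unfolding sum.distrib[symmetric]
    by (rule sum.cong, simp) (metis qint_add le_add_diff_inverse atLeastAtMost_iff distrib_right)
  also have "(\<Sum>i=0..Suc n. qint q i * q ^ (Suc n - i) * (f $ i * g $ (Suc n - i)))
      = (\<Sum>i=0..n. qint q (Suc i) * q ^ (n - i) * (f $ Suc i * g $ (n - i)))"
    by (subst sum.atLeast0_atMost_Suc_shift) simp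
  also have "(\<Sum>i=0..Suc n. qint q (Suc n - i) * (f $ i * g $ (Suc n - i)))
      = (\<Sum>i=0..n. qint q (Suc n - i) * (f $ i * g $ (Suc n - i)))"
    by (subst sum.atLeast0_atMost_Suc) simp
  finally show "qd q (f * g) $ n = (qd q f * sc q g + f * qd q g) $ n"
    by (simp add: fps_mult_nth Suc_diff_le algebra_simps)
qed

lemma diff_sc: "f - sc q f = fps_const (1 - q) * fps_X * qd q f"
proof (rule fps_ext)
  fix n show "(f - sc q f) $ n = (fps_const (1 - q) * fps_X * qd q f) $ n"
  proof (cases n)
    case (Suc k)
    have h: "(1 - q) * qint q (Suc k) = 1 - q ^ Suc k" by (rule qint_mul_diff)
    have "(1 - q) * qint q (Suc k) * f $ Suc k = (1 - q ^ Suc k) * f $ Suc k" using h by simp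
    then show ?thesis using Suc by (simp add: algebra_simps)
  qed simp
qed

definition tri :: "nat \<Rightarrow> nat" where "tri n = (\<Sum>i<n. i)"
lemma tri_Suc: "tri (Suc n) = tri n + n" by (simp add: tri_def)
lemma tri_0 [simp]: "tri 0 = 0" by (simp add: tri_def)

definition Ebig :: "real \<Rightarrow> real \<Rightarrow> real fps" where
  "Ebig q x = Abs_fps (\<lambda>n. q ^ tri n * x ^ n / qfact q n)"

definition pk :: "real \<Rightarrow> real \<Rightarrow> real \<Rightarrow> nat \<Rightarrow> real" where
  "pk q x s k = (\<Prod>i<k. x ^ 2 + q ^ (2 * i + 1) * s)"

definition Oo :: "real \<Rightarrow> real \<Rightarrow> real \<Rightarrow> real fps" where
  "Oo q x s = Abs_fps (\<lambda>n. if odd n then pk q x s (n div 2) / qfact q n else 0)"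

definition Vv :: "real \<Rightarrow> real \<Rightarrow> real \<Rightarrow> real fps" where
  "Vv q x s = Abs_fps (\<lambda>n. if n = 0 then 0 else U (n - 1) x s q / qfact q n)"

lemma qd_Ebig: assumes "q \<noteq> -1"
  shows "qd q (Ebig q x) = fps_const x * sc q (Ebig q x)"
proof (rule fps_ext)
  fix n
  have nz: "qint q (Suc n) \<noteq> 0" "qfact q n \<noteq> 0" using assms qint_nz qfact_nz by auto
  show "qd q (Ebig q x) $ n = (fps_const x * sc q (Ebig q x)) $ n"
    using nz by (simp add: Ebig_def qfact_Suc tri_Suc power_add field_simps)
qed

lemma qdd_O: assumes "q \<noteq> -1"
  shows "qd q (qd q (Oo q x s)) = fps_const (x ^ 2) * Oo q x s + fps_const s * sc q (Oo q x s)"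
proof (rule fps_ext)
  fix n
  have nz: "qint q (Suc n) \<noteq> 0" "qint q (Suc (Suc n)) \<noteq> 0" "qfact q n \<noteq> 0"
    using assms qint_nz qfact_nz by auto
  show "qd q (qd q (Oo q x s)) $ n = (fps_const (x ^ 2) * Oo q x s + fps_const s * sc q (Oo q x s)) $ n"
  proof (cases "odd n")
    case True
    then obtain k where k: "n = 2 * k + 1" by (metis oddE)
    have e1: "Suc (Suc n) div 2 = Suc k" "n div 2 = k" using k by auto
    have "pk q x s (Suc k) = pk q x s k * (x ^ 2 + q ^ (2 * k + 1) * s)"
      by (simp add: pk_def)
    then show ?thesis using True nz e1 k
      by (simp add: Oo_def qfact_Suc field_simps)
  next
    case False
    then show ?thesis by (simp add: Oo_def)
  qed
qed

lemma W_eq: fixes q x s :: real assumes "q \<noteq> -1"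
  defines "W \<equiv> Oo q x s * Ebig q x"
  shows "qd q (qd q W) = fps_const x * qd q W + fps_const x * qd q (sc q W) + fps_const s * sc q W"
proof -
  define Od where "Od = Oo q x s"
  define E where "E = Ebig q x"
  define X where "X = fps_const x"
  define Q where "Q = fps_const q"
  define S where "S = fps_const s"
  define A where "A = qd q Od + X * Od"
  define B where "B = X * A + S * sc q Od"
  have dE: "qd q E = X * sc q E" unfolding E_def X_def using assms(1) by (rule qd_Ebig)
  have dW: "qd q W = A * sc q E"
    unfolding W_def Od_def[symmetric] E_def[symmetric] A_def qd_mult dE
    by (simp add: algebra_simps)
  have dA: "qd q A = B"
    unfolding A_def B_def qd_add X_def qd_cmult Od_def S_def using qdd_O[OF assms(1), of x s]
    by (simp add: algebra_simps power2_eq_square)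
  have ddW: "qd q (qd q W) = (B + Q * X * A) * sc q (sc q E)"
    unfolding dW qd_mult qd_sc dE dA by (simp add: sc_mult X_def Q_def sc_cmult sc_const algebra_simps)
  have dsW: "qd q (sc q W) = Q * sc q A * sc q (sc q E)"
    unfolding qd_sc dW Q_def by (simp add: sc_mult algebra_simps)
  have sW: "sc q W = sc q Od * sc q E" unfolding W_def Od_def E_def by (rule sc_mult)
  have h1: "A - sc q A = fps_const (1 - q) * fps_X * B" using diff_sc[of A q] dA by simp
  have h2: "sc q E - sc q (sc q E) = fps_const (1 - q) * Q * X * fps_X * sc q (sc q E)"
  proof -
    have "qd q (sc q E) = Q * (X * sc q (sc q E))"
      unfolding qd_sc dE Q_def X_def sc_cmult ..
    then show ?thesis using diff_sc[of "sc q E" q] by (simp add: algebra_simps)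
  qed
  have "qd q (qd q W) - (X * qd q W + X * qd q (sc q W) + S * sc q W)
     = Q * X * (A - sc q A) * sc q (sc q E) - B * (sc q E - sc q (sc q E))"
    unfolding ddW dsW unfolding dW sW B_def by (simp add: algebra_simps)
  also have "\<dots> = 0" unfolding h1 h2 by (simp add: algebra_simps)
  finally show ?thesis unfolding X_def S_def by simp
qed

lemma rec_coeff:
  fixes q x s :: real and W :: "real fps"
  assumes "qd q (qd q W) = fps_const x * qd q W + fps_const x * qd q (sc q W) + fps_const s * sc q W"
  shows "qint q (Suc n) * qint q (Suc (Suc n)) * W $ Suc (Suc n)
     = x * qint q (Suc n) * (1 + q ^ Suc n) * W $ Suc n + s * q ^ n * W $ n"
proof -
  have "qd q (qd q W) $ n = (fps_const x * qd q W + fps_const x * qd q (sc q W) + fps_const s * sc q W) $ n"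
    using assms by simp
  then show ?thesis by (simp add: algebra_simps)
qed

lemma V_rec:
  fixes q x s :: real assumes "q \<noteq> -1"
  shows "qint q (Suc n) * qint q (Suc (Suc n)) * Vv q x s $ Suc (Suc n)
     = x * qint q (Suc n) * (1 + q ^ Suc n) * Vv q x s $ Suc n + s * q ^ n * Vv q x s $ n"
proof (cases n)
  case 0
  have "qint q 1 = 1" "qint q 2 = 1 + q" by (simp_all add: qint_def numeral_2_eq_2)
  moreover have "qint q 2 \<noteq> 0" using qint_nz assms by simp
  ultimately show ?thesis using 0 by (simp add: Vv_def qfact_def qint_def field_simps)
next
  case (Suc m)
  have nz: "qfact q (Suc m) \<noteq> 0" "qint q (Suc (Suc m)) \<noteq> 0" "qint q (Suc (Suc (Suc m))) \<noteq> 0"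
    using assms qint_nz qfact_nz by auto
  have "U (Suc (Suc m)) x s q = (1 + q ^ (m + 2)) * x * U (Suc m) x s q + q ^ (m + 1) * s * U m x s q"
    by simp
  then show ?thesis using Suc nz
    by (simp add: Vv_def qfact_Suc field_simps)
qed

lemma W01: "(Oo q x s * Ebig q x) $ 0 = 0" "(Oo q x s * Ebig q x) $ 1 = 1"
  by (simp_all add: fps_mult_nth Oo_def Ebig_def pk_def qfact_def qint_def)

lemma V_eq: fixes q x s :: real assumes "q \<noteq> -1"
  shows "Vv q x s = Oo q x s * Ebig q x"
proof -
  define W where "W = Oo q x s * Ebig q x"
  define V where "V = Vv q x s"
  have rw: "\<And>n. qint q (Suc n) * qint q (Suc (Suc n)) * W $ Suc (Suc n)
     = x * qint q (Suc n) * (1 + q ^ Suc n) * W $ Suc n + s * q ^ n * W $ n"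
    unfolding W_def by (rule rec_coeff, rule W_eq[OF assms])
  have rv: "\<And>n. qint q (Suc n) * qint q (Suc (Suc n)) * V $ Suc (Suc n)
     = x * qint q (Suc n) * (1 + q ^ Suc n) * V $ Suc n + s * q ^ n * V $ n"
    unfolding V_def by (rule V_rec[OF assms])
  have "V $ n = W $ n \<and> V $ Suc n = W $ Suc n" for n
  proof (induction n)
    case 0 then show ?case using W01 by (simp add: W_def V_def Vv_def qfact_def qint_def)
  next
    case (Suc n)
    have nz: "qint q (Suc n) * qint q (Suc (Suc n)) \<noteq> 0" using qint_nz assms by simp
    have "qint q (Suc n) * qint q (Suc (Suc n)) * V $ Suc (Suc n) = qint q (Suc n) * qint q (Suc (Suc n)) * W $ Suc (Suc n)"
      using rv[of n] rw[of n] Suc by simp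
    then show ?case using Suc nz by simp
  qed
  then show ?thesis unfolding V_def W_def by (simp add: fps_eq_iff)
qed

definition ex :: "real \<Rightarrow> real \<Rightarrow> real fps" where
  "ex q x = Abs_fps (\<lambda>n. x ^ n / qfact q n)"

lemma qd_ex: assumes "q \<noteq> -1" shows "qd q (ex q x) = fps_const x * ex q x"
proof (rule fps_ext)
  fix n
  have nz: "qint q (Suc n) \<noteq> 0" "qfact q n \<noteq> 0" using assms qint_nz qfact_nz by auto
  show "qd q (ex q x) $ n = (fps_const x * ex q x) $ n"
    using nz by (simp add: ex_def qfact_Suc field_simps)
qed

lemma qd_scc: "qd q (sc c f) = fps_const c * sc c (qd q f)"
  by (rule fps_ext) simp

lemma sc_comm: "sc a (sc b f) = sc b (sc a f)"
  by (simp add: sc_sc mult.commute)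

lemma ex_Em: assumes "q \<noteq> -1" shows "ex q x * sc (-1) (Ebig q x) = 1"
proof -
  define P where "P = ex q x * sc (-1) (Ebig q x)"
  have dEm: "qd q (sc (-1) (Ebig q x)) = fps_const (-x) * sc q (sc (-1) (Ebig q x))"
    unfolding qd_scc qd_Ebig[OF assms] sc_cmult sc_const
    by (simp add: sc_comm)
  have "qd q P = 0"
    unfolding P_def qd_mult qd_ex[OF assms] dEm by (simp add: fps_const_neg[symmetric] algebra_simps del: fps_const_neg)
  then have "P $ Suc n = 0" for n
    using qint_nz[OF assms, of "Suc n"] by (metis qd_nth fps_zero_nth mult_eq_0_iff nat.simps(3))
  moreover have "P $ 0 = 1" by (simp add: P_def ex_def Ebig_def)
  ultimately show ?thesis unfolding P_def[symmetric]
    by (intro fps_ext) (case_tac n; simp)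
qed

lemma sc_neg_neg: "sc (-1) (sc (-1) f) = f"
  by (simp add: sc_sc sc_one)

lemma T0: "qgen_fps q $ 0 = 0"
  by (simp add: qgen_fps_def)

definition Hp :: "real \<Rightarrow> real \<Rightarrow> real fps" where
  "Hp q x = Abs_fps (\<lambda>n. x ^ Suc n * qgen_fps q $ Suc n)"

lemma H_ex: fixes q x :: real
  shows "Hp q x * (ex q x + sc (-1) (ex q x)) = fps_const x * (ex q x - sc (-1) (ex q x))"
proof -
  define e0 where "e0 = qexp_fps q"
  have em: "qexp_neg_fps q = sc (-1) e0"
    unfolding e0_def qexp_neg_fps_def qexp_fps_def by (rule fps_ext) simp
  have exx: "ex q x = sc x e0" unfolding ex_def e0_def qexp_fps_def by (rule fps_ext) simp
  have nz: "(e0 + sc (-1) e0) $ 0 \<noteq> 0" by (simp add: e0_def qexp_fps_def)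
  have "qgen_fps q * (e0 + sc (-1) e0) = fps_X * (e0 - sc (-1) e0) * (inverse (e0 + sc (-1) e0) * (e0 + sc (-1) e0))"
    unfolding qgen_fps_def em e0_def[symmetric] by (simp add: mult.assoc)
  also have "\<dots> = fps_X * (e0 - sc (-1) e0)" using inverse_mult_eq_1[OF nz] by simp
  finally have T: "qgen_fps q * (e0 + sc (-1) e0) = fps_X * (e0 - sc (-1) e0)" .
  have "sc x (qgen_fps q * (e0 + sc (-1) e0)) = sc x (fps_X * (e0 - sc (-1) e0))" using T by simp
  then have "sc x (qgen_fps q) * (ex q x + sc (-1) (ex q x)) = fps_const x * fps_X * (ex q x - sc (-1) (ex q x))"
    unfolding sc_mult sc_add sc_diff sc_X exx by (simp add: sc_comm)
  moreover have "sc x (qgen_fps q) = fps_X * Hp q x"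
    by (rule fps_ext) (case_tac n; simp add: Hp_def T0)
  ultimately have "fps_X * (Hp q x * (ex q x + sc (-1) (ex q x))) = fps_X * (fps_const x * (ex q x - sc (-1) (ex q x)))"
    by (simp add: algebra_simps)
  then show ?thesis by simp
qed

lemma sc_1: "sc c 1 = 1"
  by (rule fps_ext) (case_tac n; simp)

lemma sc_O: "sc (-1) (Oo q x s) = - Oo q x s"
  by (rule fps_ext) (auto simp: Oo_def)

lemma key: fixes q x s :: real assumes "q \<noteq> -1"
  shows "(Vv q x s - sc (-1) (Vv q x s)) * Hp q x = fps_const x * (Vv q x s + sc (-1) (Vv q x s))"
proof -
  define E where "E = Ebig q x"
  define Em where "Em = sc (-1) E"
  define e where "e = ex q x"
  define Od where "Od = Oo q x s"
  define H where "H = Hp q x"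
  have 1: "e * Em = 1" unfolding e_def Em_def E_def by (rule ex_Em[OF assms])
  have "sc (-1) (e * Em) = 1" unfolding 1 by (rule sc_1)
  then have 2: "sc (-1) e * E = 1" unfolding sc_mult Em_def sc_neg_neg .
  have 3: "H * (e + sc (-1) e) = fps_const x * (e - sc (-1) e)" unfolding H_def e_def by (rule H_ex)
  have "H * (E + Em) = H * (e + sc (-1) e) * (E * Em)"
  proof -
    have "(e + sc (-1) e) * (E * Em) = E * (e * Em) + Em * (sc (-1) e * E)" by (simp add: algebra_simps)
    then have "(e + sc (-1) e) * (E * Em) = E + Em" unfolding 1 2 by simp
    then show ?thesis by (simp add: mult.assoc)
  qed
  also have "\<dots> = fps_const x * (E - Em)"
  proof -
    have "(e - sc (-1) e) * (E * Em) = E * (e * Em) - Em * (sc (-1) e * E)" by (simp add: algebra_simps)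
    then have "(e - sc (-1) e) * (E * Em) = E - Em" unfolding 1 2 by simp
    then show ?thesis unfolding 3 by (simp add: mult.assoc)
  qed
  finally have HE: "H * (E + Em) = fps_const x * (E - Em)" .
  have V: "Vv q x s = Od * E" unfolding Od_def E_def by (rule V_eq[OF assms])
  have rV: "sc (-1) (Vv q x s) = - (Od * Em)" unfolding V sc_mult Od_def sc_O Em_def by simp
  have "(Vv q x s - sc (-1) (Vv q x s)) * H = Od * (H * (E + Em))" unfolding rV unfolding V by (simp add: algebra_simps)
  also have "\<dots> = fps_const x * (Vv q x s + sc (-1) (Vv q x s))" unfolding HE rV unfolding V by (simp add: algebra_simps)
  finally show ?thesis unfolding H_def .
qed

lemma sum_odd:
  fixes g :: "nat \<Rightarrow> real"
  assumes "\<And>k. g (2 * k) = 0"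
  shows "(\<Sum>i=0..2*n+2. g i) = (\<Sum>k=0..n. g (2 * k + 1))"
proof (induction n)
  case 0
  have "(\<Sum>i=0..2. g i) = g 0 + g 1 + g 2" by (simp add: numeral_2_eq_2)
  then show ?case using assms[of 0] assms[of 1] by (simp add: numeral_2_eq_2)
next
  case (Suc n)
  have A: "(\<Sum>i=0..2*Suc n+2. g i) = (\<Sum>i=0..2*n+2. g i) + g (2*n+3) + g (2*n+4)"
    by (simp add: numeral_3_eq_3 eval_nat_numeral)
  have B: "(\<Sum>k=0..Suc n. g (2*k+1)) = (\<Sum>k=0..n. g (2*k+1)) + g (2*n+3)"
    by (simp add: eval_nat_numeral)
  have C: "g (2*n+4) = 0"
  proof -
    have "2*n+4 = 2*(n+2)" by simp
    then show ?thesis using assms by metis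
  qed
  show ?case unfolding A B Suc.IH C by simp
qed

lemma coeff_main: fixes q x s :: real assumes "q \<noteq> -1" "x \<noteq> 0"
  shows "U (2*n+1) x s q / qfact q (2*n+2) =
    (\<Sum>k=0..n. U (2*k) x s q / qfact q (2*k+1) * x ^ (2*n+1-2*k) * qgen_fps q $ (2*n+2-2*k))"
proof -
  define V where "V = Vv q x s"
  define T where "T = qgen_fps q"
  have "((V - sc (-1) V) * Hp q x) $ (2*n+2) = (fps_const x * (V + sc (-1) V)) $ (2*n+2)"
    unfolding V_def using key[OF assms(1)] by simp
  moreover have "(fps_const x * (V + sc (-1) V)) $ (2*n+2) = x * (2 * V $ (2*n+2))" by simp
  moreover have "((V - sc (-1) V) * Hp q x) $ (2*n+2) =
     (\<Sum>i=0..2*n+2. (V $ i - (-1) ^ i * V $ i) * (x ^ Suc (2*n+2-i) * T $ Suc (2*n+2-i)))"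
    unfolding fps_mult_nth by (rule sum.cong) (simp_all add: Hp_def T_def)
  ultimately have "(\<Sum>i=0..2*n+2. (V $ i - (-1) ^ i * V $ i) * (x ^ Suc (2*n+2-i) * T $ Suc (2*n+2-i)))
      = x * (2 * V $ (2*n+2))"
    by simp
  also have "(\<Sum>i=0..2*n+2. (V $ i - (-1) ^ i * V $ i) * (x ^ Suc (2*n+2-i) * T $ Suc (2*n+2-i)))
     = (\<Sum>k=0..n. (V $ (2*k+1) - (-1) ^ (2*k+1) * V $ (2*k+1)) * (x ^ Suc (2*n+2-(2*k+1)) * T $ Suc (2*n+2-(2*k+1))))"
    by (rule sum_odd) simp
  also have "\<dots> = (\<Sum>k=0..n. x * (2 * (V $ (2*k+1) * x ^ (2*n+1-2*k) * T $ (2*n+2-2*k))))"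
  proof (rule sum.cong)
    fix k assume "k \<in> {0..n}"
    then have e: "Suc (2*n+2-(2*k+1)) = Suc (2*n+1-2*k)" "2*n+2-2*k = Suc (2*n+1-2*k)" by auto
    then show "(V $ (2*k+1) - (-1) ^ (2*k+1) * V $ (2*k+1)) * (x ^ Suc (2*n+2-(2*k+1)) * T $ Suc (2*n+2-(2*k+1)))
        = x * (2 * (V $ (2*k+1) * x ^ (2*n+1-2*k) * T $ (2*n+2-2*k)))"
      unfolding e by (simp add: algebra_simps)
  qed simp
  finally have "x * (2 * (\<Sum>k=0..n. V $ (2*k+1) * x ^ (2*n+1-2*k) * T $ (2*n+2-2*k))) = x * (2 * V $ (2*n+2))"
    by (simp add: sum_distrib_left)
  then have "V $ (2*n+2) = (\<Sum>k=0..n. V $ (2*k+1) * x ^ (2*n+1-2*k) * T $ (2*n+2-2*k))"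
    using assms(2) by simp
  then show ?thesis by (simp add: V_def Vv_def T_def)
qed

lemma TG: fixes q :: real assumes "q \<noteq> -1"
  shows "qgen_fps q $ (2 * Suc m) = (-1) ^ m * qgenocchi q (2 * Suc m) * qpoch (-q) q (2 * m + 1) / qfact q (2 * Suc m)"
proof -
  define J where "J = 2 * Suc m"
  have J1: "J div 2 - 1 = m" "J - 1 = 2 * m + 1" by (simp_all add: J_def)
  define c where "c = (-1::real) ^ m * qpoch (-q) q (2 * m + 1) / qfact q J"
  have cnz: "c \<noteq> 0" unfolding c_def using qpoch_nz[OF assms] qfact_nz[OF assms] by simp
  have P: "\<And>g. (qgen_fps q $ J = (-1) ^ (J div 2 - 1) * g * qpoch (-q) q (J - 1) / qfact q J) \<longleftrightarrow> qgen_fps q $ J = g * c"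
    unfolding J1 c_def by (simp add: field_simps)
  have "qgenocchi q J = qgen_fps q $ J / c"
    unfolding qgenocchi_def P
  proof (rule the_equality)
    show "qgen_fps q $ J = qgen_fps q $ J / c * c" using cnz by simp
  next
    fix g assume "qgen_fps q $ J = g * c" then show "g = qgen_fps q $ J / c" using cnz by simp
  qed
  then have "qgen_fps q $ J = qgenocchi q J * c" using cnz by simp
  then show ?thesis unfolding J_def[symmetric] c_def by (simp add: field_simps)
qed

lemma U_odd_0: "U (2 * n + 1) 0 s q = 0"
proof (induction n)
  case (Suc n)
  have "U (2 * Suc n + 1) 0 s q = U (Suc (Suc (2 * n + 1))) 0 s q" by simp
  also have "\<dots> = 0" by (simp only: U.simps(3) Suc.IH mult_zero_left mult_zero_right add_0)
  finally show ?case .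
qed simp

theorem theorem3p3:
  fixes q x s :: real and n :: nat
  assumes "q \<noteq> -1"
  shows "U (2*n+1) x s q =
    (\<Sum>k=0..n. qbinom q (2*n+2) (2*k) * (1 / qint q (2*k+1))
        * qpoch (-q) q (2*n-2*k+1) * (-1) ^ (n-k) * qgenocchi q (2*n-2*k+2)
        * x ^ (2*n+1-2*k) * U (2*k) x s q)"
proof (cases "x = 0")
  case True
  have "\<forall>k\<in>{0..n}. (0::real) ^ (2*n+1-2*k) = 0" by auto
  then show ?thesis unfolding True U_odd_0 by (intro sum.neutral[symmetric] ballI) simp
next
  case False
  have fnz: "qfact q (2*n+2) \<noteq> 0" using qfact_nz[OF assms] by simp
  have "U (2*n+1) x s q = qfact q (2*n+2) *
    (\<Sum>k=0..n. U (2*k) x s q / qfact q (2*k+1) * x ^ (2*n+1-2*k) * qgen_fps q $ (2*n+2-2*k))"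
    using coeff_main[OF assms False, of n s] fnz by (simp add: field_simps)
  also have "\<dots> = (\<Sum>k=0..n. qfact q (2*n+2) *
     (U (2*k) x s q / qfact q (2*k+1) * x ^ (2*n+1-2*k) * qgen_fps q $ (2*n+2-2*k)))"
    by (simp add: sum_distrib_left)
  also have "\<dots> = (\<Sum>k=0..n. qbinom q (2*n+2) (2*k) * (1 / qint q (2*k+1))
        * qpoch (-q) q (2*n-2*k+1) * (-1) ^ (n-k) * qgenocchi q (2*n-2*k+2)
        * x ^ (2*n+1-2*k) * U (2*k) x s q)"
  proof (rule sum.cong)
    fix k assume k: "k \<in> {0..n}"
    then have e1: "2*n+2-2*k = 2 * Suc (n-k)" "2*n-2*k+2 = 2 * Suc (n-k)" "2*n-2*k+1 = 2*(n-k)+1" by auto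
    have T: "qgen_fps q $ (2*n+2-2*k) = (-1) ^ (n-k) * qgenocchi q (2 * Suc (n-k)) * qpoch (-q) q (2*(n-k)+1) / qfact q (2 * Suc (n-k))"
      unfolding e1 by (rule TG[OF assms])
    have nz: "qfact q (2*k) \<noteq> 0" "qint q (2*k+1) \<noteq> 0" "qfact q (2 * Suc (n-k)) \<noteq> 0"
      using qfact_nz[OF assms] qint_nz[OF assms] by auto
    have qf: "qfact q (2*k+1) = qfact q (2*k) * qint q (2*k+1)" using qfact_Suc[of q "2*k"] by simp
    have qb: "qbinom q (2*n+2) (2*k) = qfact q (2*n+2) / (qfact q (2*k) * qfact q (2 * Suc (n-k)))"
      unfolding qbinom_def e1(1) ..
    have sq: "((-1::real) ^ (n-k)) * (-1) ^ (n-k) = 1" by (simp add: power_mult_distrib[symmetric])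
    show "qfact q (2*n+2) *
     (U (2*k) x s q / qfact q (2*k+1) * x ^ (2*n+1-2*k) * qgen_fps q $ (2*n+2-2*k))
      = qbinom q (2*n+2) (2*k) * (1 / qint q (2*k+1))
        * qpoch (-q) q (2*n-2*k+1) * (-1) ^ (n-k) * qgenocchi q (2*n-2*k+2)
        * x ^ (2*n+1-2*k) * U (2*k) x s q"
      unfolding T qf qb e1(2) e1(3) using nz
      by (simp add: field_simps)
  qed simp
  finally show ?thesis .
qed

end
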